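(* Let $G$ be a connected hypergraph, let $u\in V(G)$, and let $v,w$ be two neighbors of $u$ that are not adjacent to each other. Let $x=x(G)$. Then $x_w+x_u-x_v>0$.
   Context: A (simple) hypergraph has edges that are vertex subsets of size at least two; two vertices are adjacent (neighbors) if some edge contains both. A loose path is an alternating sequence $(v_0,e_1,v_1,\dots,e_p,v_p)$ of distinct vertices and distinct edges with $v_{i-1},v_i\in e_i$ and $e_i\cap e_j=\emptyset$ whenever $j>i+1$; $G$ is connected if any two vertices are joined by one, and $d_G(u,v)$ is the length of a shortest loose path from $u$ to $v$. $D(G)=(d_G(u,v))$ is the distance matrix, and $x(G)$ is the unique unit positive eigenvector of $D(G)$ for its largest eigenvalue (distance Perron vector). *)

theory Defs
  imports Complex_Main
begin

definition hypergraph :: "'a set \<Rightarrow> 'a set set \<Rightarrow> bool" where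
  "hypergraph V E \<longleftrightarrow> finite V \<and> (\<forall>e\<in>E. e \<subseteq> V \<and> card e \<ge> 2)"

definition hadj :: "'a set set \<Rightarrow> 'a \<Rightarrow> 'a \<Rightarrow> bool" where
  "hadj E u v \<longleftrightarrow> u \<noteq> v \<and> (\<exists>e\<in>E. u \<in> e \<and> v \<in> e)"

text \<open>Loose path (v_0,e_1,v_1,...,e_p,v_p): vertex list vs = [v_0..v_p],
  edge list es = [e_1..e_p].\<close>
definition loose_path :: "'a set \<Rightarrow> 'a set set \<Rightarrow> 'a list \<Rightarrow> 'a set list \<Rightarrow> bool" where
  "loose_path V E vs es \<longleftrightarrow>
     length vs = length es + 1 \<and> set vs \<subseteq> V \<and> set es \<subseteq> E \<and>
     distinct vs \<and> distinct es \<and>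
     (\<forall>i < length es. vs ! i \<in> es ! i \<and> vs ! (i+1) \<in> es ! i) \<and>
     (\<forall>i < length es. \<forall>j < length es. i + 1 < j \<longrightarrow> es ! i \<inter> es ! j = {})"

definition loose_path_between ::
  "'a set \<Rightarrow> 'a set set \<Rightarrow> 'a \<Rightarrow> 'a \<Rightarrow> nat \<Rightarrow> bool" where
  "loose_path_between V E u v p \<longleftrightarrow>
     (\<exists>vs es. loose_path V E vs es \<and> hd vs = u \<and> last vs = v \<and> length es = p)"

definition hconnected :: "'a set \<Rightarrow> 'a set set \<Rightarrow> bool" where
  "hconnected V E \<longleftrightarrow> (\<forall>u\<in>V. \<forall>v\<in>V. \<exists>p. loose_path_between V E u v p)"

definition hdist :: "'a set \<Rightarrow> 'a set set \<Rightarrow> 'a \<Rightarrow> 'a \<Rightarrow> nat" where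
  "hdist V E u v = (LEAST p. loose_path_between V E u v p)"

definition dist_matrix :: "'a set \<Rightarrow> 'a set set \<Rightarrow> 'a \<Rightarrow> 'a \<Rightarrow> real" where
  "dist_matrix V E u v = real (hdist V E u v)"

text \<open>mu is an eigenvalue of D(G) with (nonzero, real) eigenvector y on V.
  D(G) is real symmetric, so all eigenvalues are real and have real eigenvectors.\<close>
definition dist_eigenpair :: "'a set \<Rightarrow> 'a set set \<Rightarrow> real \<Rightarrow> ('a \<Rightarrow> real) \<Rightarrow> bool" where
  "dist_eigenpair V E \<mu> y \<longleftrightarrow>
     (\<exists>v\<in>V. y v \<noteq> 0) \<and>
     (\<forall>u\<in>V. (\<Sum>v\<in>V. dist_matrix V E u v * y v) = \<mu> * y u)"

definition dist_perron_vector :: "'a set \<Rightarrow> 'a set set \<Rightarrow> ('a \<Rightarrow> real) \<Rightarrow> bool" where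
  "dist_perron_vector V E x \<longleftrightarrow>
     (\<forall>v\<in>V. x v > 0) \<and> (\<Sum>v\<in>V. (x v)\<^sup>2) = 1 \<and>
     (\<exists>\<rho>. dist_eigenpair V E \<rho> x \<and> (\<forall>\<mu> y. dist_eigenpair V E \<mu> y \<longrightarrow> \<mu> \<le> \<rho>))"

end

theory Submission
  imports Defs
begin

definition hwalk :: "'a set \<Rightarrow> 'a set set \<Rightarrow> 'a list \<Rightarrow> 'a set list \<Rightarrow> bool" where
  "hwalk V E vs es \<longleftrightarrow> length vs = length es + 1 \<and> set vs \<subseteq> V \<and> set es \<subseteq> E \<and>
     (\<forall>i < length es. vs ! i \<in> es ! i \<and> vs ! (i+1) \<in> es ! i)"

lemma nth_cut_v:
  assumes "i < j" "j < length vs" "k < length (take (i+1) vs @ drop (j+1) vs)"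
  shows "(take (i+1) vs @ drop (j+1) vs) ! k = (if k \<le> i then vs ! k else vs ! (k - i + j))"
  using assms by (auto simp: nth_append min_def intro!: arg_cong[where f="nth vs"])

lemma nth_cut_e:
  assumes "i < j" "j \<le> length es" "k < length (take i es @ drop j es)"
  shows "(take i es @ drop j es) ! k = (if k < i then es ! k else es ! (k - i + j))"
  using assms by (auto simp: nth_append min_def intro!: arg_cong[where f="nth es"])

lemma walk_cut:
  assumes w: "hwalk V E vs es" and ij: "i < j" "j \<le> length es"
    and c: "(j = length es \<and> vs ! i = vs ! j) \<or> (j < length es \<and> vs ! i \<in> es ! j)"
  shows "hwalk V E (take (i+1) vs @ drop (j+1) vs) (take i es @ drop j es)
     \<and> hd (take (i+1) vs @ drop (j+1) vs) = hd vs
     \<and> last (take (i+1) vs @ drop (j+1) vs) = last vs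
     \<and> length (take i es @ drop j es) < length es"
proof -
  let ?vs = "take (i+1) vs @ drop (j+1) vs" and ?es = "take i es @ drop j es"
  have L: "length vs = length es + 1" "set vs \<subseteq> V" "set es \<subseteq> E"
    and S: "\<And>k. k < length es \<Longrightarrow> vs ! k \<in> es ! k \<and> vs ! (k+1) \<in> es ! k"
    using w unfolding hwalk_def by auto
  have len: "length ?es = i + (length es - j)" "length ?vs = i + 1 + (length es - j)"
    using ij L by auto
  have "set ?vs \<subseteq> V" using L(2) set_take_subset set_drop_subset by fastforce
  moreover have "set ?es \<subseteq> E" using L(3) set_take_subset set_drop_subset by fastforce
  moreover have "\<forall>k < length ?es. ?vs ! k \<in> ?es ! k \<and> ?vs ! (k+1) \<in> ?es ! k"
  proof (intro allI impI)
    fix k assume k: "k < length ?es"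
    have vk: "?vs ! k = (if k \<le> i then vs ! k else vs ! (k - i + j))"
      by (rule nth_cut_v) (use ij L k len in auto)
    have vk1: "?vs ! (k+1) = (if k + 1 \<le> i then vs ! (k+1) else vs ! (k + 1 - i + j))"
      by (rule nth_cut_v) (use ij L k len in auto)
    have ek: "?es ! k = (if k < i then es ! k else es ! (k - i + j))"
      by (rule nth_cut_e) (use ij L k len in auto)
    show "?vs ! k \<in> ?es ! k \<and> ?vs ! (k+1) \<in> ?es ! k"
    proof (cases "k < i")
      case True then show ?thesis using vk vk1 ek S[of k] ij by auto
    next
      case False
      show ?thesis
      proof (cases "k = i")
        case True
        then have "j < length es" using k len by auto
        then show ?thesis using True vk vk1 ek S[of j] c by auto
      next
        case False2: False
        then have "k - i + j < length es" "k + 1 - i + j = k - i + j + 1" using k len False False2 by arith+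
        then show ?thesis using False False2 vk vk1 ek S[of "k - i + j"] by auto
      qed
    qed
  qed
  moreover have "length ?vs = length ?es + 1" using len by simp
  moreover have "hd ?vs = hd vs" using L by (cases vs) auto
  moreover have "last ?vs = last vs"
  proof (cases "j = length es")
    case True
    then have "?vs = take (i+1) vs" using L by simp
    then have "last ?vs = vs ! i" using L ij by (simp add: take_Suc_conv_app_nth)
    also have "\<dots> = vs ! j" using c True by auto
    also have "\<dots> = last vs" using L True by (subst last_conv_nth) auto
    finally show ?thesis .
  next
    case False
    then have "drop (j+1) vs \<noteq> []" using L ij by auto
    then show ?thesis by (simp add: last_drop)
  qed
  moreover have "length ?es < length es" using len ij by auto
  ultimately show ?thesis unfolding hwalk_def by auto
qed


lemma nth_splice_v:
  assumes "i < j" "j < length vs" "k < length (take (i+1) vs @ y # drop (j+1) vs)"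
  shows "(take (i+1) vs @ y # drop (j+1) vs) ! k =
     (if k \<le> i then vs ! k else if k = i + 1 then y else vs ! (k - i - 1 + j))"
  using assms by (auto simp: nth_append min_def nth_Cons' intro!: arg_cong[where f="nth vs"])

lemma nth_splice_e:
  assumes "i < j" "j < length es" "k < length (take (i+1) es @ drop j es)"
  shows "(take (i+1) es @ drop j es) ! k = (if k \<le> i then es ! k else es ! (k - i - 1 + j))"
  using assms by (auto simp: nth_append min_def intro!: arg_cong[where f="nth es"])

lemma walk_splice:
  assumes H: "hypergraph V E" and w: "hwalk V E vs es" and ij: "i + 1 < j" "j < length es"
    and y: "y \<in> es ! i" "y \<in> es ! j"
  shows "hwalk V E (take (i+1) vs @ y # drop (j+1) vs) (take (i+1) es @ drop j es)
     \<and> hd (take (i+1) vs @ y # drop (j+1) vs) = hd vs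
     \<and> last (take (i+1) vs @ y # drop (j+1) vs) = last vs
     \<and> length (take (i+1) es @ drop j es) < length es"
proof -
  let ?vs = "take (i+1) vs @ y # drop (j+1) vs" and ?es = "take (i+1) es @ drop j es"
  have L: "length vs = length es + 1" "set vs \<subseteq> V" "set es \<subseteq> E"
    and S: "\<And>k. k < length es \<Longrightarrow> vs ! k \<in> es ! k \<and> vs ! (k+1) \<in> es ! k"
    using w unfolding hwalk_def by auto
  have len: "length ?es = i + 1 + (length es - j)" "length ?vs = i + 2 + (length es - j)"
    using ij L by auto
  have "es ! i \<in> E" using L(3) ij by auto
  then have "y \<in> V" using H y unfolding hypergraph_def by auto
  then have "set ?vs \<subseteq> V" using L(2) set_take_subset set_drop_subset by fastforce
  moreover have "set ?es \<subseteq> E" using L(3) set_take_subset set_drop_subset by fastforce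
  moreover have "\<forall>k < length ?es. ?vs ! k \<in> ?es ! k \<and> ?vs ! (k+1) \<in> ?es ! k"
  proof (intro allI impI)
    fix k assume k: "k < length ?es"
    have vk: "?vs ! k = (if k \<le> i then vs ! k else if k = i + 1 then y else vs ! (k - i - 1 + j))"
      by (rule nth_splice_v) (use ij L k len in auto)
    have vk1: "?vs ! (k+1) = (if k + 1 \<le> i then vs ! (k+1) else if k + 1 = i + 1 then y
        else vs ! (k + 1 - i - 1 + j))"
      by (rule nth_splice_v) (use ij L k len in auto)
    have ek: "?es ! k = (if k \<le> i then es ! k else es ! (k - i - 1 + j))"
      by (rule nth_splice_e) (use ij L k len in auto)
    show "?vs ! k \<in> ?es ! k \<and> ?vs ! (k+1) \<in> ?es ! k"
    proof (cases "k < i")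
      case True then show ?thesis using vk vk1 ek S[of k] ij by auto
    next
      case False
      show ?thesis
      proof (cases "k = i")
        case True
        then show ?thesis using vk vk1 ek S[of i] y ij by auto
      next
        case False2: False
        show ?thesis
        proof (cases "k = i + 1")
          case True
          then show ?thesis using vk vk1 ek S[of j] y ij by auto
        next
          case False3: False
          then have "k - i - 1 + j < length es" "k + 1 - i - 1 + j = k - i - 1 + j + 1"
            using k len False False2 by arith+
          then show ?thesis using False False2 False3 vk vk1 ek S[of "k - i - 1 + j"] by auto
        qed
      qed
    qed
  qed
  moreover have "length ?vs = length ?es + 1" using len by simp
  moreover have "hd ?vs = hd vs" using L by (cases vs) auto
  moreover have "last ?vs = last vs"
  proof -
    have "drop (j+1) vs \<noteq> []" using L ij by auto
    then show ?thesis by (simp add: last_drop)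
  qed
  moreover have "length ?es < length es" using len ij by auto
  ultimately show ?thesis unfolding hwalk_def by auto
qed


lemma walk_to_path_aux:
  assumes H: "hypergraph V E"
  shows "hwalk V E vs es \<Longrightarrow> length es = n \<Longrightarrow>
    \<exists>p \<le> n. loose_path_between V E (hd vs) (last vs) p"
proof (induction n arbitrary: vs es rule: less_induct)
  case (less n)
  note w = less.prems(1)
  have L: "length vs = length es + 1" "set vs \<subseteq> V" "set es \<subseteq> E"
    and S: "\<And>k. k < length es \<Longrightarrow> vs ! k \<in> es ! k \<and> vs ! (k+1) \<in> es ! k"
    using w unfolding hwalk_def by auto
  have IH: "\<exists>p \<le> n. loose_path_between V E (hd vs) (last vs) p"
    if hw0: "hwalk V E vs' es' \<and> hd vs' = hd vs \<and> last vs' = last vs \<and> length es' < length es" for vs' es'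
  proof -
    have hw: "hwalk V E vs' es'" "hd vs' = hd vs" "last vs' = last vs" "length es' < length es" using hw0 by auto
    obtain p where "p \<le> length es'" "loose_path_between V E (hd vs') (last vs') p"
      using less.IH[OF _ hw(1) refl] hw less.prems(2) by auto
    then show ?thesis using hw less.prems(2) by (intro exI[of _ p]) auto
  qed
  show ?case
  proof (cases "loose_path V E vs es")
    case True
    then show ?thesis unfolding loose_path_between_def using less.prems(2) by blast
  next
    case False
    then consider (a) "\<not> distinct vs" | (b) "\<not> distinct es"
      | (c) "\<exists>i < length es. \<exists>j < length es. i + 1 < j \<and> es ! i \<inter> es ! j \<noteq> {}"
      using L S unfolding loose_path_def by blast
    then show ?thesis
    proof cases
      case a
      then obtain i j where ij: "i < length vs" "j < length vs" "i \<noteq> j" "vs ! i = vs ! j"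
        by (auto simp: distinct_conv_nth)
      then obtain i j where ij: "i < j" "j < length vs" "vs ! i = vs ! j"
        by (metis linorder_neqE_nat)
      show ?thesis
      proof (cases "j = length es")
        case True
        show ?thesis by (rule IH, rule walk_cut[OF w ij(1)]) (use True ij in auto)
      next
        case False
        then have "j < length es" using ij L by auto
        then have "vs ! i \<in> es ! j" using S ij by auto
        show ?thesis by (rule IH, rule walk_cut[OF w ij(1)]) (use \<open>j < length es\<close> \<open>vs ! i \<in> es ! j\<close> in auto)
      qed
    next
      case b
      then obtain i j where ij: "i < length es" "j < length es" "i \<noteq> j" "es ! i = es ! j"
        by (auto simp: distinct_conv_nth)
      then obtain i j where ij: "i < j" "j < length es" "es ! i = es ! j"
        by (metis linorder_neqE_nat)
      show ?thesis
      proof (cases "j = i + 1")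
        case True
        then have "vs ! i \<in> es ! j" using S ij by auto
        show ?thesis by (rule IH, rule walk_cut[OF w ij(1)]) (use ij \<open>vs ! i \<in> es ! j\<close> in auto)
      next
        case False
        then have "i + 1 < j" using ij by auto
        moreover have "vs ! i \<in> es ! i" "vs ! i \<in> es ! j" using S ij by auto
        ultimately have "i + 1 < j" "vs ! i \<in> es ! i" "vs ! i \<in> es ! j" by auto
        show ?thesis by (rule IH, rule walk_splice[OF H w \<open>i + 1 < j\<close> ij(2)]) fact+
      qed
    next
      case c
      then obtain i j y where ij: "i + 1 < j" "j < length es" "y \<in> es ! i" "y \<in> es ! j"
        by blast
      show ?thesis by (rule IH, rule walk_splice[OF H w ij])
    qed
  qed
qed

lemma walk_to_path:
  assumes "hypergraph V E" "hwalk V E vs es"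
  shows "\<exists>p \<le> length es. loose_path_between V E (hd vs) (last vs) p"
  using walk_to_path_aux[OF assms refl] .

lemma path_walk: "loose_path V E vs es \<Longrightarrow> hwalk V E vs es"
  unfolding loose_path_def hwalk_def by auto

lemma hdist_le: "loose_path_between V E a b p \<Longrightarrow> hdist V E a b \<le> p"
  unfolding hdist_def by (rule Least_le)

lemma hdist_ex:
  assumes "hconnected V E" "a \<in> V" "b \<in> V"
  shows "loose_path_between V E a b (hdist V E a b)"
proof -
  obtain p where "loose_path_between V E a b p" using assms unfolding hconnected_def by blast
  then show ?thesis unfolding hdist_def by (rule LeastI)
qed

lemma walk_dist:
  assumes "hypergraph V E" "hwalk V E vs es"
  shows "hdist V E (hd vs) (last vs) \<le> length es"
  using walk_to_path[OF assms] hdist_le by (meson le_trans)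

lemma hdist_pos:
  assumes "hconnected V E" "a \<in> V" "b \<in> V" "a \<noteq> b"
  shows "hdist V E a b \<ge> 1"
proof (rule ccontr)
  assume "\<not> ?thesis"
  then have "hdist V E a b = 0" by simp
  then have "loose_path_between V E a b 0" using hdist_ex[OF assms(1-3)] by simp
  then obtain vs es where "loose_path V E vs es" "hd vs = a" "last vs = b" "length es = 0"
    unfolding loose_path_between_def by blast
  then have "length vs = 1" unfolding loose_path_def by simp
  then obtain c where "vs = [c]" by (cases vs) auto
  then show False using \<open>hd vs = a\<close> \<open>last vs = b\<close> assms(4) by simp
qed

lemma hdist_self: "a \<in> V \<Longrightarrow> hdist V E a a = 0"
proof -
  assume "a \<in> V"
  then have "loose_path V E [a] []" unfolding loose_path_def by simp
  then have "loose_path_between V E a a 0" unfolding loose_path_between_def by force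
  then show ?thesis using hdist_le by force
qed

lemma hdist_step:
  assumes H: "hypergraph V E" and C: "hconnected V E" and "u \<in> V" "v \<in> V" "z \<in> V"
    and "hadj E u v"
  shows "hdist V E v z \<le> 1 + hdist V E u z"
proof -
  obtain vs es where P: "loose_path V E vs es" "hd vs = u" "last vs = z" "length es = hdist V E u z"
    using hdist_ex[OF C assms(3,5)] unfolding loose_path_between_def by blast
  obtain e where e: "e \<in> E" "v \<in> e" "u \<in> e" using assms(6) unfolding hadj_def by blast
  have W: "hwalk V E vs es" using path_walk[OF P(1)] .
  then have ne: "vs \<noteq> []" unfolding hwalk_def by auto
  have "hwalk V E (v # vs) (e # es)"
    using W e ne P(2) assms(4) unfolding hwalk_def
    by (auto simp: nth_Cons hd_conv_nth split: nat.split)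
  from walk_dist[OF H this] show ?thesis using ne P by simp
qed

lemma hdist_two:
  assumes H: "hypergraph V E" and "u \<in> V" "v \<in> V" "w \<in> V"
    and "hadj E u v" "hadj E u w"
  shows "hdist V E v w \<le> 2"
proof -
  obtain e where e: "e \<in> E" "v \<in> e" "u \<in> e" using assms(5) unfolding hadj_def by blast
  obtain f where f: "f \<in> E" "w \<in> f" "u \<in> f" using assms(6) unfolding hadj_def by blast
  have "hwalk V E [v, u, w] [e, f]"
    using e f assms unfolding hwalk_def by (auto simp: less_Suc_eq nth_Cons')
  from walk_dist[OF H this] show ?thesis by simp
qed


theorem lemma4p3:
  fixes V :: "'a set" and E :: "'a set set" and x :: "'a \<Rightarrow> real"
  assumes "hypergraph V E" and "hconnected V E"
    and "u \<in> V" and "v \<in> V" and "w \<in> V" and "v \<noteq> w"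
    and "hadj E u v" and "hadj E u w" and "\<not> hadj E v w"
    and "dist_perron_vector V E x"
  shows "x w + x u - x v > 0"
proof -
  note H = assms(1) and C = assms(2)
  let ?D = "dist_matrix V E"
  have pos: "\<And>z. z \<in> V \<Longrightarrow> x z > 0" using assms(10) unfolding dist_perron_vector_def by auto
  obtain \<rho> where eig: "\<And>a. a \<in> V \<Longrightarrow> (\<Sum>z\<in>V. ?D a z * x z) = \<rho> * x a"
    using assms(10) unfolding dist_perron_vector_def dist_eigenpair_def by blast
  have fin: "finite V" using H unfolding hypergraph_def by auto
  have "0 \<le> (\<Sum>z\<in>V. ?D u z * x z)"
    using pos by (intro sum_nonneg) (auto simp: dist_matrix_def less_imp_le)
  then have "0 \<le> \<rho> * x u" using eig[OF assms(3)] by simp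
  then have rho: "0 \<le> \<rho>" using pos[OF assms(3)] by (simp add: zero_le_mult_iff)
  have uv: "u \<noteq> v" "u \<noteq> w" using assms(7,8) unfolding hadj_def by auto
  have eq: "\<rho> * (x w + x u - x v) = (\<Sum>z\<in>V. (?D w z + ?D u z - ?D v z) * x z)"
    using eig[OF assms(5)] eig[OF assms(3)] eig[OF assms(4)]
    by (simp add: algebra_simps sum.distrib sum_subtractf)
  let ?g = "\<lambda>z. (if z = v then x v else 0) - (if z = w then x w else 0)"
  have pt: "?g z \<le> (?D w z + ?D u z - ?D v z) * x z" if z: "z \<in> V" for z
  proof (cases "z = v")
    case True
    have "hdist V E w v \<ge> 1" using hdist_pos[OF C assms(5,4)] assms(6) by auto
    then have "1 \<le> ?D w z + ?D u z - ?D v z"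
      using True hdist_self[OF assms(4)] unfolding dist_matrix_def by simp
    then show ?thesis using True assms(6) pos[OF assms(4)]
      by (simp add: mult_le_cancel_right1)
  next
    case False
    show ?thesis
    proof (cases "z = w")
      case True
      have "hdist V E u w \<ge> 1" using hdist_pos[OF C assms(3,5)] uv by auto
      moreover have "hdist V E v w \<le> 2" using hdist_two[OF H assms(3,4,5,7,8)] .
      ultimately have "- 1 \<le> ?D w z + ?D u z - ?D v z"
        using True hdist_self[OF assms(5)] unfolding dist_matrix_def by simp
      then have "-1 * x w \<le> (?D w z + ?D u z - ?D v z) * x w"
        using pos[OF assms(5)] by (intro mult_right_mono) auto
      then show ?thesis using True False by simp
    next
      case False2: False
      have "hdist V E w z \<ge> 1" using hdist_pos[OF C assms(5) z] False2 by auto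
      moreover have "hdist V E v z \<le> 1 + hdist V E u z" by (rule hdist_step[OF H C assms(3,4) z assms(7)])
      ultimately have "0 \<le> ?D w z + ?D u z - ?D v z" unfolding dist_matrix_def by simp
      then show ?thesis using False False2 pos[OF z] by simp
    qed
  qed
  have "(\<Sum>z\<in>V. ?g z) = x v - x w"
    using fin assms(4,5) by (simp add: sum_subtractf)
  moreover have "(\<Sum>z\<in>V. ?g z) \<le> (\<Sum>z\<in>V. (?D w z + ?D u z - ?D v z) * x z)"
    using pt by (rule sum_mono)
  ultimately have key: "x v - x w \<le> \<rho> * (x w + x u - x v)" using eq by simp
  show ?thesis
  proof (rule ccontr)
    assume "\<not> ?thesis"
    then have "x w + x u - x v \<le> 0" by simp
    then have "\<rho> * (x w + x u - x v) \<le> 0" using rho by (simp add: mult_nonneg_nonpos)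
    moreover have "x v - x w > 0" using \<open>x w + x u - x v \<le> 0\<close> pos[OF assms(3)] by simp
    ultimately show False using key by simp
  qed
qed

end
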